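(* There is a constant $C>0$ such that every $P\in\Gamma^{1/p}L^{p'}(\mathbb R^3;\mathbb R^3)\cap\Gamma^{1/q}L^{q'}(\mathbb R^3;\mathbb R^3)$ satisfies $P\in L^{6/5}(\mathbb R^3;\mathbb R^3)$ and $\|P\|_{6/5}\le C\big(\|\Gamma^{-1/p}P\|_{p'}+\|\Gamma^{-1/q}P\|_{q'}\big)$.
   Context: Standing parameters: $0<\alpha<3$, $2<p<6$, $\max\{2,6-2\alpha\}<q<\infty$, $p'=p/(p-1)$, $q'=q/(q-1)$, and $\Gamma:\mathbb R^3\to(0,\infty)$ is measurable with $0<c_0\le\Gamma(x)(1+|x|)^{\alpha}\le C_0<\infty$ for a.e. $x$. $\Gamma^{1/r}L^{r'}$ denotes measurable fields $P$ with $\Gamma^{-1/r}P\in L^{r'}$. *)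

theory Defs
  imports "HOL-Analysis.Analysis"
begin

definition in_Lp :: "real \<Rightarrow> (real^3 \<Rightarrow> 'b::euclidean_space) \<Rightarrow> bool" where
  "in_Lp r f \<longleftrightarrow> f \<in> borel_measurable lebesgue \<and>
     (\<integral>\<^sup>+ x. ennreal (norm (f x) powr r) \<partial>lebesgue) < \<infinity>"

definition Lp_norm :: "real \<Rightarrow> (real^3 \<Rightarrow> 'b::euclidean_space) \<Rightarrow> real" where
  "Lp_norm r f = (enn2real (\<integral>\<^sup>+ x. ennreal (norm (f x) powr r) \<partial>lebesgue)) powr (1 / r)"

definition conj_exp :: "real \<Rightarrow> real" where
  "conj_exp r = r / (r - 1)"

text \<open>Weighted space Gamma^(1/r) L^(r'): measurable fields P with Gamma^(-1/r) P in L^(r').\<close>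
definition in_weighted_Lp :: "(real^3 \<Rightarrow> real) \<Rightarrow> real \<Rightarrow> (real^3 \<Rightarrow> real^3) \<Rightarrow> bool" where
  "in_weighted_Lp \<Gamma> r P \<longleftrightarrow> P \<in> borel_measurable lebesgue \<and>
     in_Lp (conj_exp r) (\<lambda>x. \<Gamma> x powr (-1 / r) *\<^sub>R P x)"

end

theory Submission
  imports Defs
begin


lemma int1d:
  fixes g :: real assumes g: "g > 1"
  shows "(\<integral>\<^sup>+ t. ennreal ((1 + \<bar>t\<bar>) powr (-g)) \<partial>lborel) < \<infinity>"
proof -
  define h1 where "h1 = (\<lambda>x::real. ennreal (x powr (-g)) * indicator {1..} x)"
  have hi: "((\<lambda>x::real. x powr (-g)) has_integral -(1 powr (-g+1)) / (-g+1)) {1..}"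
    using has_integral_powr_to_inf[of "-g" 1] g by simp
  have "integral\<^sup>N lborel h1 = ennreal (-(1 powr (-g+1)) / (-g+1))"
    unfolding h1_def by (rule nn_integral_has_integral_lebesgue'[OF _ hi]) auto
  then have f1: "integral\<^sup>N lborel h1 < \<infinity>" by simp
  have m1[measurable]: "h1 \<in> borel_measurable borel" unfolding h1_def by measurable
  define h0 where "h0 = (\<lambda>x. h1 (1 + 1 * x))"
  have m0[measurable]: "h0 \<in> borel_measurable borel" unfolding h0_def by measurable
  have "integral\<^sup>N lborel h1 = ennreal \<bar>1\<bar> * integral\<^sup>N lborel h0"
    unfolding h0_def by (rule nn_integral_real_affine) auto
  with f1 have f0: "integral\<^sup>N lborel h0 < \<infinity>" by simp
  have "integral\<^sup>N lborel h0 = ennreal \<bar>-1\<bar> * (\<integral>\<^sup>+x. h0 (0 + (-1) * x) \<partial>lborel)"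
    by (rule nn_integral_real_affine) auto
  with f0 have f0': "(\<integral>\<^sup>+x. h0 (- x) \<partial>lborel) < \<infinity>" by simp
  have pw: "ennreal ((1 + \<bar>t\<bar>) powr (-g)) \<le> h0 t + h0 (- t)" for t
  proof (cases "t \<ge> 0")
    case True
    then have "h0 t = ennreal ((1 + \<bar>t\<bar>) powr (-g))" unfolding h0_def h1_def by auto
    then show ?thesis by simp
  next
    case False
    then have "h0 (-t) = ennreal ((1 + \<bar>t\<bar>) powr (-g))" unfolding h0_def h1_def by auto
    then show ?thesis by simp
  qed
  have "(\<integral>\<^sup>+ t. ennreal ((1 + \<bar>t\<bar>) powr (-g)) \<partial>lborel) \<le> (\<integral>\<^sup>+ t. h0 t + h0 (- t) \<partial>lborel)"
    by (rule nn_integral_mono) (rule pw)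
  also have "\<dots> = integral\<^sup>N lborel h0 + (\<integral>\<^sup>+x. h0 (- x) \<partial>lborel)"
    by (rule nn_integral_add) auto
  also have "\<dots> < \<infinity>" using f0 f0' by simp
  finally show ?thesis .
qed


lemma intnD:
  fixes \<beta> :: real assumes b: "\<beta> > DIM('a)"
  shows "(\<integral>\<^sup>+ x. ennreal ((1 + norm (x::'a::euclidean_space)) powr (-\<beta>)) \<partial>lborel) < \<infinity>"
proof -
  define D where "D = real DIM('a)"
  have D: "D \<ge> 1" unfolding D_def by (simp add: DIM_positive Suc_leI)
  define g where "g = \<beta> / D"
  have g: "g > 1" using b D unfolding g_def D_def by (simp add: field_simps)
  obtain v where v: "(\<integral>\<^sup>+ t. ennreal ((1 + \<bar>t\<bar>) powr (-g)) \<partial>lborel) = ennreal v" "v \<ge> 0"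
    using int1d[OF g] less_top_ennreal by (metis infinity_ennreal_def)
  have pw: "ennreal ((1 + norm x) powr (-\<beta>)) \<le> (\<Prod>b\<in>Basis. ennreal ((1 + \<bar>x \<bullet> b\<bar>) powr (-g)))" for x :: 'a
  proof -
    have "(1 + norm x) powr (-\<beta>) = (\<Prod>b\<in>(Basis::'a set). (1 + norm x) powr (-g))"
    proof -
      have "(\<Prod>b\<in>(Basis::'a set). (1 + norm x) powr (-g)) = ((1 + norm x) powr (-g)) ^ DIM('a)"
        by simp
      also have "\<dots> = ((1 + norm x) powr (-g)) powr D"
        unfolding D_def by (subst powr_realpow) (auto simp: add_pos_nonneg, smt (verit) norm_ge_zero)
      also have "\<dots> = (1 + norm x) powr (-\<beta>)"
        unfolding powr_powr g_def using D by simp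
      finally show ?thesis by simp
    qed
    also have "\<dots> \<le> (\<Prod>b\<in>Basis. (1 + \<bar>x \<bullet> b\<bar>) powr (-g))"
      apply (rule prod_mono)
      using g Basis_le_norm[of _ x] by (auto intro!: powr_mono2')
    finally show ?thesis by (simp add: prod_ennreal ennreal_leI)
  qed
  have "(\<integral>\<^sup>+ x. ennreal ((1 + norm (x::'a)) powr (-\<beta>)) \<partial>lborel)
      \<le> (\<integral>\<^sup>+ x. (\<Prod>b\<in>Basis. ennreal ((1 + \<bar>(x::'a) \<bullet> b\<bar>) powr (-g))) \<partial>lborel)"
    by (rule nn_integral_mono) (rule pw)
  also have "\<dots> = (\<Prod>b\<in>(Basis::'a set). (\<integral>\<^sup>+ t. ennreal ((1 + \<bar>t\<bar>) powr (-g)) \<partial>lborel))"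
    by (rule nn_integral_lborel_prod) auto
  also have "\<dots> = ennreal (v ^ DIM('a))" using v by (simp add: ennreal_power)
  also have "\<dots> < \<infinity>" by simp
  finally show ?thesis .
qed


lemma conj_id:
  fixes r \<gamma> g :: real assumes "1 < r" "0 < \<gamma>" "0 \<le> g"
  shows "(\<gamma> powr (-1/r) * (\<gamma> * g)) powr (r/(r-1)) = \<gamma> * g powr (r/(r-1))"
proof -
  have "\<gamma> powr (-1/r) * (\<gamma> * g) = \<gamma> powr ((r-1)/r) * g"
  proof -
    have "\<gamma> powr (-1/r) * \<gamma> = \<gamma> powr (-1/r + 1)" using assms by (subst powr_add) simp
    also have "-1/r + 1 = (r-1)/r" using assms by (simp add: field_simps)
    finally show ?thesis by (simp add: mult.assoc)
  qed
  then have "(\<gamma> powr (-1/r) * (\<gamma> * g)) powr (r/(r-1)) = (\<gamma> powr ((r-1)/r) * g) powr (r/(r-1))"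
    by (simp only:)
  also have "\<dots> = (\<gamma> powr ((r-1)/r)) powr (r/(r-1)) * g powr (r/(r-1))"
    by (rule powr_mult)
  also have "(\<gamma> powr ((r-1)/r)) powr (r/(r-1)) = \<gamma>"
    using assms by (simp add: powr_powr)
  finally show ?thesis .
qed

lemma dl: "0 \<le> x \<Longrightarrow> 1 < t \<Longrightarrow> x / t \<le> (x::real)"
  using mult_right_mono[of 1 t x] by (simp add: divide_le_eq algebra_simps)

lemma kl: "0 \<le> x \<Longrightarrow> 1 \<le> k \<Longrightarrow> x \<le> k * (x::real)"
  using mult_right_mono[of 1 k x] by simp

lemma pointwise:
  fixes p q \<gamma> u C0 :: real
  assumes p: "1 < p" "p < 6" and q: "1 < q" and g: "0 < \<gamma>" "\<gamma> \<le> C0" and u: "0 \<le> u"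
  shows "u powr (6/5) \<le> max 1 (C0 powr (1/5)) * ((if q < 6 then \<gamma> powr (6/(6-q)) else 0)
           + (\<gamma> powr (-1/p) * u) powr (p/(p-1)) + (\<gamma> powr (-1/q) * u) powr (q/(q-1)))"
    (is "_ \<le> ?K * (?H + ?A + ?B)")
proof -
  have K1: "1 \<le> ?K" by simp
  have H0: "0 \<le> ?H" by simp
  have A0: "0 \<le> ?A" and B0: "0 \<le> ?B" by simp_all
  show ?thesis
  proof (cases "q < 6")
    case True
    define w where "w = \<gamma> powr (-1/q) * u"
    have w0: "0 \<le> w" unfolding w_def using u by simp
    have uw: "u = \<gamma> powr (1/q) * w" unfolding w_def using g
      by (simp add: mult.assoc[symmetric] powr_add[symmetric])
    define s where "s = 5*q/(6*(q-1))"
    define s' where "s' = 5*q/(6-q)"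
    have s1: "s > 1" unfolding s_def using True q by (simp add: field_simps)
    have s'1: "s' > 1" unfolding s'_def using True q by (simp add: field_simps)
    have ss: "1/s' + 1/s = 1" unfolding s_def s'_def using True q by (simp add: field_simps)
    have e: "6/5 * s = q/(q-1)" unfolding s_def using q by (simp add: field_simps)
    have wB: "(w powr (6/5)) powr s = ?B"
      unfolding powr_powr e w_def[symmetric] ..
    have "u powr (6/5) = \<gamma> powr (6/(5*q)) * w powr (6/5)"
      unfolding uw using g by (simp add: powr_mult powr_powr ac_simps)
    also have "\<dots> \<le> (\<gamma> powr (6/(5*q))) powr s' / s' + (w powr (6/5)) powr s / s"
      by (rule Youngs_inequality[OF s'1 s1 ss]) auto
    also have "(\<gamma> powr (6/(5*q))) powr s' = \<gamma> powr (6/(6-q))"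
      unfolding s'_def powr_powr using q True by (simp add: field_simps)
    also have "(w powr (6/5)) powr s = ?B" by (rule wB)
    also have "\<gamma> powr (6/(6-q)) / s' + ?B / s \<le> \<gamma> powr (6/(6-q)) + ?B"
      using s1 s'1 by (intro add_mono dl) auto
    also have "\<dots> \<le> ?H + ?A + ?B" using True A0 by simp
    also have "\<dots> \<le> ?K * (?H + ?A + ?B)" using K1 H0 A0 B0
      by (intro kl) auto
    finally show ?thesis .
  next
    case False
    define gg where "gg = u / \<gamma>"
    have gg0: "0 \<le> gg" unfolding gg_def using u g by simp
    have ug: "u = \<gamma> * gg" unfolding gg_def using g by simp
    have Aeq: "?A = \<gamma> * gg powr (p/(p-1))" unfolding ug by (rule conj_id) (use p g gg0 in auto)
    have Beq: "?B = \<gamma> * gg powr (q/(q-1))" unfolding ug by (rule conj_id) (use q g gg0 in auto)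
    have u65: "u powr (6/5) = \<gamma> powr (1/5) * (\<gamma> * gg powr (6/5))"
    proof -
      have "u powr (6/5) = \<gamma> powr (6/5) * gg powr (6/5)" unfolding ug by (simp add: powr_mult)
      also have "\<gamma> powr (6/5) = \<gamma> powr (1/5) * \<gamma>"
        using g powr_add[of \<gamma> "1/5" 1] by simp
      finally show ?thesis by simp
    qed
    have gC: "\<gamma> powr (1/5) \<le> ?K"
      using g by (metis max.coboundedI2 order.strict_implies_order powr_mono2 zero_le_divide_1_iff zero_le_numeral)
    have "\<gamma> * gg powr (6/5) \<le> ?A + ?B"
    proof (cases "gg \<ge> 1")
      case True
      have "gg powr (6/5) \<le> gg powr (p/(p-1))"
        using True p by (intro powr_mono) (auto simp: field_simps)
      then have "\<gamma> * gg powr (6/5) \<le> ?A" unfolding Aeq using g by simp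
      then show ?thesis using B0 by linarith
    next
      case c: False
      have "gg powr (6/5) \<le> gg powr (q/(q-1))"
        using c False q gg0 by (intro powr_mono') (auto simp: field_simps)
      then have "\<gamma> * gg powr (6/5) \<le> ?B" unfolding Beq using g by simp
      then show ?thesis using A0 by linarith
    qed
    then have "u powr (6/5) \<le> ?K * (?A + ?B)"
      unfolding u65 using gC g by (intro mult_mono) (auto simp: gg0)
    then show ?thesis using False by simp
  qed
qed


lemma L1:
  fixes f :: "real^3 \<Rightarrow> 'b::euclidean_space" and r M :: real
  assumes f: "in_Lp r f" and r: "0 < r" and M: "0 < M" and le: "Lp_norm r f \<le> M"
  shows "(\<integral>\<^sup>+ x. ennreal ((norm (f x) / M) powr r) \<partial>lebesgue) \<le> 1"
proof -
  have [measurable]: "f \<in> borel_measurable lebesgue" using f unfolding in_Lp_def by simp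
  define I where "I = enn2real (\<integral>\<^sup>+ x. ennreal (norm (f x) powr r) \<partial>lebesgue)"
  have fin: "(\<integral>\<^sup>+ x. ennreal (norm (f x) powr r) \<partial>lebesgue) < \<infinity>" using f unfolding in_Lp_def by simp
  have I0: "0 \<le> I" unfolding I_def by simp
  have Ieq: "(\<integral>\<^sup>+ x. ennreal (norm (f x) powr r) \<partial>lebesgue) = ennreal I"
    unfolding I_def using fin by (simp add: ennreal_enn2real_if less_top)
  have "I powr (1/r) \<le> M" using le unfolding Lp_norm_def I_def .
  then have "(I powr (1/r)) powr r \<le> M powr r" using r I0 by (intro powr_mono2) auto
  then have IM: "I \<le> M powr r" using r I0 by (simp add: powr_powr)
  have "(\<integral>\<^sup>+ x. ennreal ((norm (f x) / M) powr r) \<partial>lebesgue)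
      = (\<integral>\<^sup>+ x. ennreal (norm (f x) powr r) * ennreal (1 / M powr r) \<partial>lebesgue)"
    using M by (intro nn_integral_cong) (simp add: powr_divide ennreal_mult'[symmetric])
  also have "\<dots> = ennreal I * ennreal (1 / M powr r)"
    by (subst nn_integral_multc) (auto simp: Ieq)
  also have "\<dots> = ennreal (I / M powr r)" using I0 by (simp add: ennreal_mult'[symmetric])
  also have "\<dots> \<le> 1" using IM M by (simp add: divide_le_eq_1)
  finally show ?thesis .
qed

lemma Hfin:
  fixes \<Gamma> :: "real^3 \<Rightarrow> real" and e \<alpha> C0 :: real
  assumes [measurable]: "\<Gamma> \<in> borel_measurable lebesgue" and pos: "\<forall>x. 0 < \<Gamma> x"
    and e: "0 < e" "\<alpha> * e > 3" and C0: "0 < C0"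
    and ae: "AE x in lebesgue. \<Gamma> x * (1 + norm x) powr \<alpha> \<le> C0"
  shows "(\<integral>\<^sup>+ x. ennreal (\<Gamma> x powr e) \<partial>lebesgue) < \<infinity>"
proof -
  have "AE x in lebesgue. ennreal (\<Gamma> x powr e) \<le> ennreal (C0 powr e) * ennreal ((1 + norm x) powr (-(\<alpha> * e)))"
    using ae
  proof eventually_elim
    case (elim x)
    have n: "0 < 1 + norm x" by (simp add: add_pos_nonneg)
    have "\<Gamma> x \<le> C0 * (1 + norm x) powr (-\<alpha>)"
      using elim n by (simp add: powr_minus field_simps)
    then have "\<Gamma> x powr e \<le> (C0 * (1 + norm x) powr (-\<alpha>)) powr e"
      using pos[rule_format, of x] e by (intro powr_mono2) auto
    also have "\<dots> = C0 powr e * (1 + norm x) powr (-(\<alpha> * e))"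
      by (simp add: powr_mult powr_powr)
    finally show ?case using C0 by (simp add: ennreal_mult'[symmetric] ennreal_leI)
  qed
  then have "(\<integral>\<^sup>+ x. ennreal (\<Gamma> x powr e) \<partial>lebesgue) \<le>
       (\<integral>\<^sup>+ x. ennreal (C0 powr e) * ennreal ((1 + norm (x::real^3)) powr (-(\<alpha> * e))) \<partial>lebesgue)"
    by (rule nn_integral_mono_AE)
  also have "\<dots> = (\<integral>\<^sup>+ x. ennreal (C0 powr e) * ennreal ((1 + norm (x::real^3)) powr (-(\<alpha> * e))) \<partial>lborel)"
    by (rule nn_integral_completion)
  also have "\<dots> = ennreal (C0 powr e) * (\<integral>\<^sup>+ x. ennreal ((1 + norm (x::real^3)) powr (-(\<alpha> * e))) \<partial>lborel)"
    by (rule nn_integral_cmult) measurable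
  also have "\<dots> < \<infinity>"
    using intnD[of "\<alpha> * e", where 'a="real^3"] e by (simp add: ennreal_mult_less_top)
  finally show ?thesis .
qed


lemma one_over_six_fifths: "1 / (6 / 5 :: real) = 5 / 6" by simp

theorem mainTheorem10:
  fixes \<alpha> p q c\<^sub>0 C\<^sub>0 :: real and \<Gamma> :: "real^3 \<Rightarrow> real"
  assumes "0 < \<alpha>" "\<alpha> < 3"
    and "2 < p" "p < 6"
    and "max 2 (6 - 2 * \<alpha>) < q"
    and "\<Gamma> \<in> borel_measurable lebesgue"
    and "\<forall>x. 0 < \<Gamma> x"
    and "0 < c\<^sub>0" "c\<^sub>0 \<le> C\<^sub>0"
    and "AE x in lebesgue. c\<^sub>0 \<le> \<Gamma> x * (1 + norm x) powr \<alpha> \<and> \<Gamma> x * (1 + norm x) powr \<alpha> \<le> C\<^sub>0"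
  shows "\<exists>C>0. \<forall>P :: real^3 \<Rightarrow> real^3.
           in_weighted_Lp \<Gamma> p P \<and> in_weighted_Lp \<Gamma> q P \<longrightarrow>
             in_Lp (6/5) P \<and>
             Lp_norm (6/5) P \<le> C * (Lp_norm (conj_exp p) (\<lambda>x. \<Gamma> x powr (-1 / p) *\<^sub>R P x)
                                     + Lp_norm (conj_exp q) (\<lambda>x. \<Gamma> x powr (-1 / q) *\<^sub>R P x))"
proof -
  note a = assms
  have [measurable]: "\<Gamma> \<in> borel_measurable lebesgue" by fact
  have pos: "\<And>x. 0 < \<Gamma> x" using a by auto
  have C0: "0 < C\<^sub>0" using a by linarith
  have q2: "2 < q" using a by simp
  define K where "K = max 1 (C\<^sub>0 powr (1/5))"
  have K1: "1 \<le> K" unfolding K_def by simp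
  define Hf where "Hf = (\<lambda>x. if q < 6 then \<Gamma> x powr (6/(6-q)) else 0)"
  have [measurable]: "Hf \<in> borel_measurable lebesgue" unfolding Hf_def by measurable
  have ae1: "AE x in lebesgue. \<Gamma> x * (1 + norm x) powr \<alpha> \<le> C\<^sub>0"
    using a(10) by (rule AE_mp) auto
  have aeC: "AE x in lebesgue. \<Gamma> x \<le> C\<^sub>0"
    using ae1
  proof eventually_elim
    case (elim x)
    have "1 \<le> (1 + norm x) powr \<alpha>" using a(1) by (intro ge_one_powr_ge_zero) auto
    then have "\<Gamma> x * 1 \<le> \<Gamma> x * (1 + norm x) powr \<alpha>" using pos[of x] by (intro mult_left_mono) auto
    then show ?case using elim by simp
  qed
  have Hfin: "(\<integral>\<^sup>+ x. ennreal (Hf x) \<partial>lebesgue) < \<infinity>"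
  proof (cases "q < 6")
    case True
    have "\<alpha> * (6 / (6 - q)) > 3" using True a(5) by (simp add: field_simps)
    moreover have "0 < 6 / (6 - q)" using True by simp
    ultimately show ?thesis unfolding Hf_def using True Hfin[OF a(6) a(7) _ _ C0 ae1, of "6 / (6 - q)"]
      by simp
  qed (simp add: Hf_def)
  define IH where "IH = enn2real (\<integral>\<^sup>+ x. ennreal (Hf x) \<partial>lebesgue)"
  have IH0: "0 \<le> IH" unfolding IH_def by simp
  have IHeq: "(\<integral>\<^sup>+ x. ennreal (Hf x) \<partial>lebesgue) = ennreal IH"
    unfolding IH_def using Hfin by (simp add: ennreal_enn2real_if less_top)
  define C where "C = (K * (IH + 2)) powr (5/6)"
  have KI: "0 < K * (IH + 2)" using K1 IH0 by simp
  have Cpos: "0 < C" unfolding C_def using KI by (simp only: powr_gt_zero)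
  define pp where "pp = conj_exp p"
  define qq where "qq = conj_exp q"
  have pp: "pp = p/(p-1)" "0 < pp" unfolding pp_def conj_exp_def using a by auto
  have qq: "qq = q/(q-1)" "0 < qq" unfolding qq_def conj_exp_def using q2 by auto
  show ?thesis
  proof (intro exI[of _ C] conjI allI impI Cpos)
    fix P :: "real^3 \<Rightarrow> real^3"
    assume H: "in_weighted_Lp \<Gamma> p P \<and> in_weighted_Lp \<Gamma> q P"
    have [measurable]: "P \<in> borel_measurable lebesgue" using H unfolding in_weighted_Lp_def by simp
    define F1 where "F1 = (\<lambda>x. \<Gamma> x powr (-1 / p) *\<^sub>R P x)"
    define F2 where "F2 = (\<lambda>x. \<Gamma> x powr (-1 / q) *\<^sub>R P x)"
    have F1: "in_Lp pp F1" using H unfolding in_weighted_Lp_def F1_def pp_def by simp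
    have F2: "in_Lp qq F2" using H unfolding in_weighted_Lp_def F2_def qq_def by simp
    define N1 where "N1 = Lp_norm pp F1"
    define N2 where "N2 = Lp_norm qq F2"
    have N1: "0 \<le> N1" and N2: "0 \<le> N2" unfolding N1_def N2_def Lp_norm_def by simp_all
    have nF1: "norm (F1 x) = \<Gamma> x powr (-1/p) * norm (P x)" for x
      unfolding F1_def by simp
    have nF2: "norm (F2 x) = \<Gamma> x powr (-1/q) * norm (P x)" for x
      unfolding F2_def by simp
    have key: "(\<integral>\<^sup>+ x. ennreal (norm (P x) powr (6/5)) \<partial>lebesgue) \<le> ennreal (K * (IH + 2) * M powr (6/5))"
      if M: "0 < M" "N1 \<le> M" "N2 \<le> M" for M
    proof -
      have "AE x in lebesgue. ennreal (norm (P x) powr (6/5)) \<le>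
            ennreal (K * M powr (6/5)) * (ennreal (Hf x) + ennreal ((norm (F1 x) / M) powr pp)
                + ennreal ((norm (F2 x) / M) powr qq))"
        using aeC
      proof eventually_elim
        case (elim x)
        have pw: "(norm (P x) / M) powr (6/5) \<le> K * (Hf x + (\<Gamma> x powr (-1/p) * (norm (P x) / M)) powr pp
               + (\<Gamma> x powr (-1/q) * (norm (P x) / M)) powr qq)"
          unfolding K_def Hf_def pp qq
          by (rule pointwise) (use a pos elim M q2 in auto)
        have e1: "\<Gamma> x powr (-1/p) * (norm (P x) / M) = norm (F1 x) / M" unfolding nF1 by simp
        have e2: "\<Gamma> x powr (-1/q) * (norm (P x) / M) = norm (F2 x) / M" unfolding nF2 by simp
        have "norm (P x) powr (6/5) = M powr (6/5) * (norm (P x) / M) powr (6/5)"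
          using M by (simp add: powr_divide)
        also have "\<dots> \<le> M powr (6/5) * (K * (Hf x + (norm (F1 x) / M) powr pp + (norm (F2 x) / M) powr qq))"
          using pw unfolding e1 e2 by (intro mult_left_mono) auto
        finally have "norm (P x) powr (6/5) \<le> K * M powr (6/5) * (Hf x + (norm (F1 x) / M) powr pp + (norm (F2 x) / M) powr qq)"
          by (simp add: ac_simps)
        moreover have "0 \<le> Hf x" unfolding Hf_def by simp
        ultimately show ?case using K1
          by (simp add: ennreal_mult'[symmetric] ennreal_plus[symmetric] ennreal_leI del: ennreal_plus)
      qed
      then have "(\<integral>\<^sup>+ x. ennreal (norm (P x) powr (6/5)) \<partial>lebesgue) \<le>
          (\<integral>\<^sup>+ x. ennreal (K * M powr (6/5)) * (ennreal (Hf x) + ennreal ((norm (F1 x) / M) powr pp)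
                + ennreal ((norm (F2 x) / M) powr qq)) \<partial>lebesgue)"
        by (rule nn_integral_mono_AE)
      also have "\<dots> = ennreal (K * M powr (6/5)) * ((\<integral>\<^sup>+ x. ennreal (Hf x) \<partial>lebesgue)
             + (\<integral>\<^sup>+ x. ennreal ((norm (F1 x) / M) powr pp) \<partial>lebesgue)
             + (\<integral>\<^sup>+ x. ennreal ((norm (F2 x) / M) powr qq) \<partial>lebesgue))"
        unfolding F1_def F2_def
        by (subst nn_integral_cmult; measurable?) (subst nn_integral_add; measurable?; subst nn_integral_add; measurable?)+
      also have "\<dots> \<le> ennreal (K * M powr (6/5)) * (ennreal IH + 1 + 1)"
        unfolding IHeq
        by (intro mult_left_mono add_mono order.refl L1[OF F1 pp(2) M(1)] L1[OF F2 qq(2) M(1)])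
           (use M N1_def N2_def in auto)
      also have "\<dots> = ennreal (K * (IH + 2) * M powr (6/5))"
      proof -
        have "ennreal IH + 1 + 1 = ennreal (IH + 2)" using IH0
          by (metis add.assoc ennreal_1 ennreal_plus one_add_one zero_le_one add_nonneg_nonneg)
        moreover have "0 \<le> K * M powr (6/5)" using K1 by simp
        ultimately have "ennreal (K * M powr (6/5)) * (ennreal IH + 1 + 1) = ennreal (K * M powr (6/5) * (IH + 2))"
          using IH0 by (simp only: ennreal_mult)
        also have "K * M powr (6/5) * (IH + 2) = K * (IH + 2) * M powr (6/5)" by (simp add: ac_simps)
        finally show ?thesis .
      qed
      finally show ?thesis .
    qed
    have fin: "(\<integral>\<^sup>+ x. ennreal (norm (P x) powr (6/5)) \<partial>lebesgue) < \<infinity>"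
      using key[of "N1 + N2 + 1"] N1 N2 by (simp add: le_less_trans)
    then show "in_Lp (6/5) P" unfolding in_Lp_def by simp
    have bnd: "Lp_norm (6/5) P \<le> C * (N1 + N2 + \<epsilon>)" if eps: "0 < \<epsilon>" for \<epsilon>
    proof -
      define M where "M = N1 + N2 + \<epsilon>"
      have M: "0 < M" "N1 \<le> M" "N2 \<le> M" unfolding M_def using N1 N2 eps by auto
      have "enn2real (\<integral>\<^sup>+ x. ennreal (norm (P x) powr (6/5)) \<partial>lebesgue) \<le> K * (IH + 2) * M powr (6/5)"
        using key[OF M] KI M by (intro enn2real_leI) auto
      then have "Lp_norm (6/5) P \<le> (K * (IH + 2) * M powr (6/5)) powr (5/6)"
        unfolding Lp_norm_def by (simp only: one_over_six_fifths) (intro powr_mono2, auto)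
      also have "\<dots> = C * M" unfolding C_def using KI M
        by (simp add: powr_mult powr_powr)
      finally show ?thesis unfolding M_def .
    qed
    show "Lp_norm (6/5) P \<le> C * (Lp_norm (conj_exp p) (\<lambda>x. \<Gamma> x powr (-1 / p) *\<^sub>R P x)
                                     + Lp_norm (conj_exp q) (\<lambda>x. \<Gamma> x powr (-1 / q) *\<^sub>R P x))"
      unfolding N1_def[unfolded F1_def pp_def, symmetric] N2_def[unfolded F2_def qq_def, symmetric]
    proof (rule field_le_epsilon)
      fix e :: real assume "0 < e"
      then have "Lp_norm (6/5) P \<le> C * (N1 + N2 + e / C)" using Cpos by (intro bnd) auto
      then show "Lp_norm (6/5) P \<le> C * (N1 + N2) + e" using Cpos by (simp add: distrib_left)
    qed
  qed
qed

end
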